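(* Let $G$ be a connected graph. The following are equivalent: (1) $G$ is a tree; (2) any two $\mathbb{T}$-gain graphs on $G$ are $\mathbb{T}$-cospectral; (3) the adjacency matrices of any two $\mathbb{T}$-gain graphs on $G$ have the same spectral radius.
   Context: Graphs are finite, simple and undirected. $\mathbb{T}=\{z\in\mathbb{C}:|z|=1\}$. A $\mathbb{T}$-gain on $G$ is a map $\varphi$ from oriented edges $\overrightarrow{e_{st}}$ of $G$ to $\mathbb{T}$ with $\varphi(\overrightarrow{e_{ts}})=\varphi(\overrightarrow{e_{st}})^{-1}$; $\Phi=(G,\varphi)$ is a $\mathbb{T}$-gain graph, and its adjacency matrix $A(\Phi)$ is the Hermitian matrix with $(s,t)$ entry $\varphi(\overrightarrow{e_{st}})$ if $v_s\sim v_t$, else $0$. $\mathbb{T}$-cospectral means the adjacency matrices have the same spectrum. *)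

theory Defs
  imports "Jordan_Normal_Form.Spectral_Radius"
begin

definition simple_graph :: "nat \<Rightarrow> (nat \<Rightarrow> nat \<Rightarrow> bool) \<Rightarrow> bool" where
  "simple_graph n E \<longleftrightarrow> (\<forall>s t. E s t \<longrightarrow> s < n \<and> t < n \<and> s \<noteq> t \<and> E t s)"

definition graph_connected :: "nat \<Rightarrow> (nat \<Rightarrow> nat \<Rightarrow> bool) \<Rightarrow> bool" where
  "graph_connected n E \<longleftrightarrow> (\<forall>s<n. \<forall>t<n. (s, t) \<in> {(a, b). E a b}\<^sup>*)"

definition has_cycle :: "(nat \<Rightarrow> nat \<Rightarrow> bool) \<Rightarrow> bool" where
  "has_cycle E \<longleftrightarrow> (\<exists>vs. length vs \<ge> 3 \<and> distinct vs \<and>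
      (\<forall>i. Suc i < length vs \<longrightarrow> E (vs ! i) (vs ! Suc i)) \<and> E (last vs) (hd vs))"

definition is_tree :: "nat \<Rightarrow> (nat \<Rightarrow> nat \<Rightarrow> bool) \<Rightarrow> bool" where
  "is_tree n E \<longleftrightarrow> graph_connected n E \<and> \<not> has_cycle E"

text \<open>A T-gain on G: phi s t is the gain of the oriented edge from s to t.\<close>
definition T_gain :: "(nat \<Rightarrow> nat \<Rightarrow> bool) \<Rightarrow> (nat \<Rightarrow> nat \<Rightarrow> complex) \<Rightarrow> bool" where
  "T_gain E \<phi> \<longleftrightarrow> (\<forall>s t. E s t \<longrightarrow> cmod (\<phi> s t) = 1 \<and> \<phi> t s = inverse (\<phi> s t))"

definition gain_adj :: "nat \<Rightarrow> (nat \<Rightarrow> nat \<Rightarrow> bool) \<Rightarrow> (nat \<Rightarrow> nat \<Rightarrow> complex) \<Rightarrow> complex mat" where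
  "gain_adj n E \<phi> = mat n n (\<lambda>(s, t). if E s t then \<phi> s t else 0)"

definition cospectral :: "complex mat \<Rightarrow> complex mat \<Rightarrow> bool" where
  "cospectral A B \<longleftrightarrow> (\<forall>a. order a (char_poly A) = order a (char_poly B))"

end

theory Submission
  imports Defs
begin


lemma gain_adj_carrier[simp]: "gain_adj n E \<phi> \<in> carrier_mat n n"
  unfolding gain_adj_def by simp

lemma gain_adj_dim[simp]: "dim_row (gain_adj n E \<phi>) = n" "dim_col (gain_adj n E \<phi>) = n"
  unfolding gain_adj_def by simp_all

lemma gain_adj_index[simp]: "i < n \<Longrightarrow> j < n \<Longrightarrow> gain_adj n E \<phi> $$ (i,j) = (if E i j then \<phi> i j else 0)"
  unfolding gain_adj_def by simp

lemma cospectral_spectrum: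
  assumes A: "A \<in> carrier_mat n n" and B: "B \<in> carrier_mat n n" and c: "cospectral A B"
  shows "spectrum A = spectrum B"
proof -
  have nz: "char_poly A \<noteq> 0" "char_poly B \<noteq> 0"
    using degree_monic_char_poly[OF A] degree_monic_char_poly[OF B] by auto
  have "poly (char_poly A) k = 0 \<longleftrightarrow> poly (char_poly B) k = 0" for k
    using c[unfolded cospectral_def, rule_format, of k] nz
    by (metis order_root)
  thus ?thesis unfolding spectrum_root_char_poly[OF A] spectrum_root_char_poly[OF B] by auto
qed

lemma cospectral_radius:
  assumes A: "A \<in> carrier_mat n n" and B: "B \<in> carrier_mat n n" and c: "cospectral A B"
  shows "spectral_radius A = spectral_radius B"
  unfolding spectral_radius_def cospectral_spectrum[OF A B c] ..

lemma similar_cospectral: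
  assumes "similar_mat A B" shows "cospectral A B"
  unfolding cospectral_def char_poly_similar[OF assms] by simp



lemma rtrancl_distinct_path:
  assumes "(v,u) \<in> {(a,b). R a b}\<^sup>*"
  shows "\<exists>vs. vs \<noteq> [] \<and> hd vs = v \<and> last vs = u \<and> distinct vs \<and>
           (\<forall>i. Suc i < length vs \<longrightarrow> R (vs!i) (vs!Suc i))"
  using assms
proof (induction rule: converse_rtrancl_induct)
  case base
  show ?case by (intro exI[of _ "[u]"]) auto
next
  case (step v y)
  then obtain vs where vs: "vs \<noteq> []" "hd vs = y" "last vs = u" "distinct vs"
    "\<forall>i. Suc i < length vs \<longrightarrow> R (vs!i) (vs!Suc i)" by blast
  from step(1) have Rvy: "R v y" by simp
  show ?case
  proof (cases "v \<in> set vs")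
    case False
    show ?thesis
    proof (intro exI[of _ "v # vs"] conjI allI impI)
      fix i assume "Suc i < length (v # vs)"
      then show "R ((v # vs) ! i) ((v # vs) ! Suc i)"
        using vs Rvy by (cases i) (auto simp: hd_conv_nth)
    qed (use vs False in auto)
  next
    case True
    then obtain p q where pq: "vs = p @ v # q" by (meson split_list)
    show ?thesis
    proof (intro exI[of _ "v # q"] conjI allI impI)
      fix i assume i: "Suc i < length (v # q)"
      have "Suc (length p + i) < length vs" using i pq by simp
      hence "R (vs ! (length p + i)) (vs ! Suc (length p + i))"
        using vs(5) by blast
      moreover have "vs ! (length p + i) = (v # q) ! i" "vs ! (length p + Suc i) = (v # q) ! Suc i"
        using pq nth_append_length_plus by metis+
      ultimately show "R ((v # q) ! i) ((v # q) ! Suc i)" by simp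
    qed (use vs pq in auto)
  qed
qed

lemma has_cycle_mono:
  assumes "has_cycle E'" "\<And>s t. E' s t \<Longrightarrow> E s t"
  shows "has_cycle E"
proof -
  from assms(1) obtain vs where "length vs \<ge> 3" "distinct vs"
      "\<forall>i. Suc i < length vs \<longrightarrow> E' (vs ! i) (vs ! Suc i)" "E' (last vs) (hd vs)"
    unfolding has_cycle_def by blast
  thus ?thesis unfolding has_cycle_def using assms(2) by blast
qed

lemma forest_balanced:
  assumes "finite F" "F = {(s,t). E s t}" "\<forall>s t. E s t \<longrightarrow> s \<noteq> t \<and> E t s"
    "\<not> has_cycle E" "\<forall>s t. E s t \<longrightarrow> cmod (\<chi> s t) = 1 \<and> \<chi> t s = inverse (\<chi> s t)"
  shows "\<exists>\<theta>. (\<forall>s. cmod (\<theta> s) = 1) \<and> (\<forall>s t. E s t \<longrightarrow> \<chi> s t = \<theta> s * cnj (\<theta> t))"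
  using assms
proof (induction F arbitrary: E rule: finite_psubset_induct)
  case (psubset F)
  show ?case
  proof (cases "F = {}")
    case True
    then show ?thesis using psubset.prems by (intro exI[of _ "\<lambda>_. 1"]) auto
  next
    case False
    then obtain u v where uv: "(u,v) \<in> F" by auto
    hence Euv: "E u v" using psubset.prems by auto
    have Evu: "E v u" "u \<noteq> v" using Euv psubset.prems by auto
    define E' where "E' = (\<lambda>s t. E s t \<and> \<not> ((s = u \<and> t = v) \<or> (s = v \<and> t = u)))"
    have sub: "{(s,t). E' s t} \<subset> F" using uv psubset.prems unfolding E'_def by auto
    have symE': "\<forall>s t. E' s t \<longrightarrow> s \<noteq> t \<and> E' t s" using psubset.prems unfolding E'_def by auto
    have EE': "E' s t \<Longrightarrow> E s t" for s t unfolding E'_def by simp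
    have nocyc: "\<not> has_cycle E'"
      using psubset.prems(3) has_cycle_mono[of E' E] EE' by blast
    have gain': "\<forall>s t. E' s t \<longrightarrow> cmod (\<chi> s t) = 1 \<and> \<chi> t s = inverse (\<chi> s t)"
      using psubset.prems(4) EE' by blast
    obtain \<theta>' where th': "\<forall>s. cmod (\<theta>' s) = 1" "\<forall>s t. E' s t \<longrightarrow> \<chi> s t = \<theta>' s * cnj (\<theta>' t)"
      using psubset.IH[OF sub refl symE' nocyc gain'] by blast
    define C where "C = {w. (v,w) \<in> {(a,b). E' a b}\<^sup>*}"
    have uC: "u \<notin> C"
    proof
      assume "u \<in> C"
      then obtain vs where vs: "vs \<noteq> []" "hd vs = v" "last vs = u" "distinct vs"
        "\<forall>i. Suc i < length vs \<longrightarrow> E' (vs!i) (vs!Suc i)"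
        using rtrancl_distinct_path[of v u E'] unfolding C_def by auto
      have "length vs \<noteq> 1" using vs Evu
        by (metis One_nat_def last_conv_nth hd_conv_nth diff_Suc_1 less_numeral_extra(3))
      moreover have "length vs \<noteq> 2"
      proof
        assume l: "length vs = 2"
        hence "E' (vs!0) (vs!1)" using vs(5) by auto
        moreover have "vs!0 = v" "vs!1 = u" using vs l by (auto simp: hd_conv_nth last_conv_nth)
        ultimately show False unfolding E'_def by auto
      qed
      moreover have "length vs \<noteq> 0" using vs by auto
      ultimately have "length vs \<ge> 3" by linarith
      moreover have "\<forall>i. Suc i < length vs \<longrightarrow> E (vs!i) (vs!Suc i)" using vs(5) unfolding E'_def by auto
      ultimately have "has_cycle E" unfolding has_cycle_def using vs Euv by auto
      thus False using psubset.prems by auto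
    qed
    have closed: "s \<in> C \<longleftrightarrow> t \<in> C" if "E' s t" for s t
    proof
      assume "s \<in> C" thus "t \<in> C" using that unfolding C_def
        by (auto intro: rtrancl_into_rtrancl)
    next
      assume "t \<in> C" thus "s \<in> C" using that symE' unfolding C_def
        by (auto intro: rtrancl_into_rtrancl)
    qed
    have vC: "v \<in> C" unfolding C_def by auto
    define c where "c = cnj (\<chi> u v) * cnj (\<theta>' v) * \<theta>' u"
    have unit: "cmod z = 1 \<Longrightarrow> z * cnj z = 1" "cmod z = 1 \<Longrightarrow> cnj z * z = 1" for z :: complex
      by (metis complex_norm_square mult.commute of_real_1 power_one)+
    have chiuv: "cmod (\<chi> u v) = 1" "\<chi> v u = cnj (\<chi> u v)"
      using psubset.prems(4) Euv unit(1)[of "\<chi> u v"] inverse_unique[of "\<chi> u v" "cnj (\<chi> u v)"]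
      by auto
    have cmodc: "cmod c = 1" unfolding c_def by (simp add: norm_mult chiuv th'(1))
    have cc: "c * cnj c = 1" using unit(1)[OF cmodc] .
    define \<theta> where "\<theta> = (\<lambda>w. if w \<in> C then c * \<theta>' w else \<theta>' w)"
    show ?thesis
    proof (intro exI[of _ \<theta>] conjI allI impI)
      fix s show "cmod (\<theta> s) = 1" unfolding \<theta>_def using th'(1) cmodc
        by (simp add: norm_mult)
    next
      fix s t assume Est: "E s t"
      show "\<chi> s t = \<theta> s * cnj (\<theta> t)"
      proof (cases "E' s t")
        case True
        show ?thesis
        proof (cases "s \<in> C")
          case sC: True
          hence tC: "t \<in> C" using closed[OF True] by simp
          have "\<theta> s * cnj (\<theta> t) = (c * cnj c) * (\<theta>' s * cnj (\<theta>' t))"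
            unfolding \<theta>_def using sC tC by (simp add: mult_ac)
          thus ?thesis using cc th'(2) True by simp
        next
          case sC: False
          hence tC: "t \<notin> C" using closed[OF True] by simp
          show ?thesis unfolding \<theta>_def using sC tC th'(2) True by simp
        qed
      next
        case False
        hence "(s = u \<and> t = v) \<or> (s = v \<and> t = u)" using Est unfolding E'_def by auto
        then show ?thesis
        proof
          assume st: "s = u \<and> t = v"
          have "\<theta> s * cnj (\<theta> t) = \<theta>' u * cnj c * cnj (\<theta>' v)" using st uC vC unfolding \<theta>_def by simp
          also have "\<dots> = \<chi> u v * (\<theta>' u * cnj (\<theta>' u)) * (\<theta>' v * cnj (\<theta>' v))"
            unfolding c_def by (simp add: mult_ac)
          also have "\<dots> = \<chi> u v" using unit(1) th'(1) by simp
          finally show ?thesis using st by simp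
        next
          assume st: "s = v \<and> t = u"
          have "\<theta> s * cnj (\<theta> t) = c * \<theta>' v * cnj (\<theta>' u)" using st uC vC unfolding \<theta>_def by simp
          also have "\<dots> = cnj (\<chi> u v) * (\<theta>' u * cnj (\<theta>' u)) * (\<theta>' v * cnj (\<theta>' v))"
            unfolding c_def by (simp add: mult_ac)
          also have "\<dots> = \<chi> v u" using unit(1) th'(1) chiuv by simp
          finally show ?thesis using st by simp
        qed
      qed
    qed
  qed
qed



lemma unit_inv: "cmod z = 1 \<Longrightarrow> inverse z = cnj z"
  by (metis complex_norm_square inverse_unique mult.commute of_real_1 power_one)

lemma unit_mult_cnj: "cmod z = 1 \<Longrightarrow> z * cnj z = 1"
  by (metis complex_norm_square mult.commute of_real_1 power_one)

definition dmat :: "nat \<Rightarrow> (nat \<Rightarrow> complex) \<Rightarrow> complex mat" where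
  "dmat n d = mat n n (\<lambda>(i,j). if i = j then d i else 0)"

lemma dmat_carrier[simp]: "dmat n d \<in> carrier_mat n n" unfolding dmat_def by simp

lemma dmat_dim[simp]: "dim_row (dmat n d) = n" "dim_col (dmat n d) = n" unfolding dmat_def by simp_all

lemma dmat_index[simp]: "i < n \<Longrightarrow> j < n \<Longrightarrow> dmat n d $$ (i,j) = (if i = j then d i else 0)"
  unfolding dmat_def by simp

lemma dmat_left: assumes "A \<in> carrier_mat n m" "i < n" "j < m"
  shows "(dmat n d * A) $$ (i,j) = d i * A $$ (i,j)"
proof -
  have "(dmat n d * A) $$ (i,j) = (\<Sum>k\<in>{0..<n}. (if i = k then d i else 0) * A $$ (k,j))"
    using assms by (simp add: dmat_def scalar_prod_def cong: if_cong)
  also have "\<dots> = (\<Sum>k\<in>{0..<n}. if k = i then d i * A $$ (i,j) else 0)"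
    by (rule sum.cong) auto
  also have "\<dots> = d i * A $$ (i,j)" using assms(2) by simp
  finally show ?thesis .
qed

lemma dmat_right: assumes "A \<in> carrier_mat m n" "i < m" "j < n"
  shows "(A * dmat n d) $$ (i,j) = A $$ (i,j) * d j"
proof -
  have "(A * dmat n d) $$ (i,j) = (\<Sum>k\<in>{0..<n}. A $$ (i,k) * (if k = j then d j else 0))"
    using assms by (simp add: dmat_def scalar_prod_def cong: if_cong)
  also have "\<dots> = (\<Sum>k\<in>{0..<n}. if k = j then A $$ (i,j) * d j else 0)"
    by (rule sum.cong) auto
  also have "\<dots> = A $$ (i,j) * d j" using assms(3) by simp
  finally show ?thesis .
qed

lemma dmat_mult: "dmat n d * dmat n e = dmat n (\<lambda>i. d i * e i)"
proof (rule eq_matI)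
  fix i j assume "i < dim_row (dmat n (\<lambda>i. d i * e i))" "j < dim_col (dmat n (\<lambda>i. d i * e i))"
  thus "(dmat n d * dmat n e) $$ (i, j) = dmat n (\<lambda>i. d i * e i) $$ (i, j)"
    by (simp del: index_mult_mat add: dmat_left[of "dmat n e" n n])
qed auto

lemma tree_similar:
  assumes sg: "simple_graph n E" and nc: "\<not> has_cycle E" and g: "T_gain E \<phi>" "T_gain E \<psi>"
  shows "similar_mat (gain_adj n E \<phi>) (gain_adj n E \<psi>)"
proof -
  define \<chi> where "\<chi> = (\<lambda>s t. \<phi> s t * cnj (\<psi> s t))"
  have fin: "finite {(s,t). E s t}"
    by (rule finite_subset[of _ "{..<n} \<times> {..<n}"]) (use sg in \<open>auto simp: simple_graph_def\<close>)
  have sym: "\<forall>s t. E s t \<longrightarrow> s \<noteq> t \<and> E t s" using sg by (auto simp: simple_graph_def)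
  have gc: "\<forall>s t. E s t \<longrightarrow> cmod (\<chi> s t) = 1 \<and> \<chi> t s = inverse (\<chi> s t)"
  proof (intro allI impI)
    fix s t assume "E s t"
    hence u: "cmod (\<phi> s t) = 1" "cmod (\<psi> s t) = 1" "\<phi> t s = cnj (\<phi> s t)" "\<psi> t s = cnj (\<psi> s t)"
      using g unit_inv by (auto simp: T_gain_def)
    hence "cmod (\<chi> s t) = 1" by (simp add: \<chi>_def norm_mult)
    moreover have "\<chi> t s = cnj (\<chi> s t)" using u by (simp add: \<chi>_def)
    ultimately show "cmod (\<chi> s t) = 1 \<and> \<chi> t s = inverse (\<chi> s t)" using unit_inv by simp
  qed
  obtain \<theta> where th: "\<forall>s. cmod (\<theta> s) = 1" "\<forall>s t. E s t \<longrightarrow> \<chi> s t = \<theta> s * cnj (\<theta> t)"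
    using forest_balanced[OF fin refl sym nc gc] by blast
  let ?P = "dmat n \<theta>" and ?Q = "dmat n (\<lambda>i. cnj (\<theta> i))"
  have PQ: "?P * ?Q = 1\<^sub>m n" "?Q * ?P = 1\<^sub>m n" unfolding dmat_mult
    using th(1) unit_mult_cnj by (auto simp: dmat_def mult.commute intro!: eq_matI)
  have eq: "gain_adj n E \<phi> = ?P * gain_adj n E \<psi> * ?Q"
  proof (rule eq_matI)
    fix i j assume ij: "i < dim_row (?P * gain_adj n E \<psi> * ?Q)" "j < dim_col (?P * gain_adj n E \<psi> * ?Q)"
    hence ij: "i < n" "j < n" by auto
    have "(?P * gain_adj n E \<psi> * ?Q) $$ (i,j) = \<theta> i * gain_adj n E \<psi> $$ (i,j) * cnj (\<theta> j)"
    proof -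
      have c1: "dmat n \<theta> * gain_adj n E \<psi> \<in> carrier_mat n n" by (rule mult_carrier_mat[OF dmat_carrier gain_adj_carrier])
      show ?thesis
        unfolding dmat_right[OF c1 ij] dmat_left[OF gain_adj_carrier ij] by simp
    qed
    also have "\<dots> = gain_adj n E \<phi> $$ (i,j)"
    proof (cases "E i j")
      case True
      have "\<phi> i j = \<chi> i j * \<psi> i j" unfolding \<chi>_def using g True unit_mult_cnj[of "\<psi> i j"]
        by (auto simp: T_gain_def mult.assoc mult.commute[of "cnj _"])
      then show ?thesis using ij True th(2) by (simp add: mult_ac)
    qed (use ij in simp)
    finally show "gain_adj n E \<phi> $$ (i,j) = (?P * gain_adj n E \<psi> * ?Q) $$ (i,j)" by simp
  qed auto
  show ?thesis unfolding similar_mat_def similar_mat_wit_def Let_def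
    by (intro exI[of _ ?P] exI[of _ ?Q]) (use PQ eq in auto)
qed



lemma smult_mat_vec_assoc: assumes "A \<in> carrier_mat n m" "v \<in> carrier_vec m"
  shows "(a \<cdot>\<^sub>m A) *\<^sub>v v = a \<cdot>\<^sub>v (A *\<^sub>v (v :: complex vec))"
proof (rule eq_vecI)
  fix i assume "i < dim_vec (a \<cdot>\<^sub>v (A *\<^sub>v v))"
  hence i: "i < n" using assms by simp
  show "((a \<cdot>\<^sub>m A) *\<^sub>v v) $ i = (a \<cdot>\<^sub>v (A *\<^sub>v v)) $ i"
    using i assms by (auto simp: scalar_prod_def sum_distrib_left mult.assoc intro!: sum.cong)
qed (use assms in simp)

lemma smult_pow_mat: assumes A: "A \<in> carrier_mat n n"
  shows "(a \<cdot>\<^sub>m A) ^\<^sub>m k = (a ^ k :: complex) \<cdot>\<^sub>m (A ^\<^sub>m k)"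
proof (induction k)
  case 0
  then show ?case using A by (auto intro!: eq_matI)
next
  case (Suc k)
  have "(a \<cdot>\<^sub>m A) ^\<^sub>m Suc k = (a ^ k \<cdot>\<^sub>m (A ^\<^sub>m k)) * (a \<cdot>\<^sub>m A)" using Suc by simp
  also have "\<dots> = a ^ k \<cdot>\<^sub>m ((A ^\<^sub>m k) * (a \<cdot>\<^sub>m A))"
    by (rule mult_smult_assoc_mat[of _ n n _ n]) (use A in auto)
  also have "(A ^\<^sub>m k) * (a \<cdot>\<^sub>m A) = a \<cdot>\<^sub>m ((A ^\<^sub>m k) * A)"
    by (rule mult_smult_distrib[of _ n n _ n]) (use A in auto)
  finally show ?case using A by (auto intro!: eq_matI)
qed

lemma spectral_radius_nonneg: assumes "A \<in> carrier_mat n n" "n > 0"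
  shows "spectral_radius A \<ge> 0"
  using spectral_radius_mem_max(1)[OF assms] by auto

lemma growth_bound:
  assumes M: "M \<in> carrier_mat n n" and n: "n > 0" and s: "spectral_radius M < s"
  shows "\<exists>c. \<forall>k i j. i < n \<longrightarrow> j < n \<longrightarrow> cmod ((M ^\<^sub>m k) $$ (i,j)) \<le> c * s ^ k"
proof -
  have s0: "s > 0" using spectral_radius_nonneg[OF M n] s by simp
  define M' where "M' = complex_of_real (1/s) \<cdot>\<^sub>m M"
  have M': "M' \<in> carrier_mat n n" unfolding M'_def using M by simp
  have MM': "M = complex_of_real s \<cdot>\<^sub>m M'"
    unfolding M'_def using M s0 by (auto intro!: eq_matI)
  have "spectral_radius M' < 1"
  proof -
    obtain \<mu> where mu: "\<mu> \<in> spectrum M'" "spectral_radius M' = cmod \<mu>"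
      using spectral_radius_mem_max(1)[OF M' n] by auto
    then obtain v where v: "eigenvector M' v \<mu>" unfolding spectrum_def eigenvalue_def by auto
    hence v': "v \<in> carrier_vec n" "v \<noteq> 0\<^sub>v n" "M' *\<^sub>v v = \<mu> \<cdot>\<^sub>v v"
      using M' unfolding eigenvector_def by auto
    have "M *\<^sub>v v = (complex_of_real s * \<mu>) \<cdot>\<^sub>v v"
      unfolding MM' smult_mat_vec_assoc[OF M' v'(1)] v'(3) by (simp add: smult_smult_assoc)
    hence "eigenvector M v (complex_of_real s * \<mu>)" using v' M unfolding eigenvector_def by auto
    hence "complex_of_real s * \<mu> \<in> spectrum M" unfolding spectrum_def eigenvalue_def by auto
    hence "cmod (complex_of_real s * \<mu>) \<le> spectral_radius M"
      using spectral_radius_mem_max(2)[OF M n] by auto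
    hence "s * cmod \<mu> \<le> spectral_radius M" using s0 by (simp add: norm_mult)
    hence "s * cmod \<mu> < s * 1" using s by linarith
    hence "cmod \<mu> < 1" using mult_less_cancel_left_pos[OF s0] by blast
    thus ?thesis using mu by simp
  qed
  then obtain c where c: "\<And>k. norm_bound (M' ^\<^sub>m k) c"
    using spectral_radius_jnf_norm_bound_less_1_upper_triangular[OF M'] by blast
  show ?thesis
  proof (intro exI[of _ c] allI impI)
    fix k i j assume ij: "i < n" "j < n"
    have "cmod ((M' ^\<^sub>m k) $$ (i,j)) \<le> c" using c[of k] ij M' unfolding norm_bound_def by auto
    moreover have "(M' ^\<^sub>m k) $$ (i,j) = complex_of_real ((1/s)^k) * (M ^\<^sub>m k) $$ (i,j)"
      unfolding M'_def smult_pow_mat[OF M] using ij M by simp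
    ultimately have "(1/s)^k * cmod ((M ^\<^sub>m k) $$ (i,j)) \<le> c"
      using s0 by (simp add: norm_mult norm_power norm_divide)
    hence "cmod ((M ^\<^sub>m k) $$ (i,j)) \<le> c * s^k" using s0
      by (simp add: field_simps power_divide)
    thus "cmod ((M ^\<^sub>m k) $$ (i,j)) \<le> c * s ^ k" .
  qed
qed



definition ipn :: "nat \<Rightarrow> (nat \<Rightarrow> real) \<Rightarrow> (nat \<Rightarrow> real) \<Rightarrow> real" where
  "ipn n u w = (\<Sum>i\<in>{0..<n}. u i * w i)"

definition appb :: "nat \<Rightarrow> (nat \<Rightarrow> nat \<Rightarrow> real) \<Rightarrow> (nat \<Rightarrow> real) \<Rightarrow> (nat \<Rightarrow> real)" where
  "appb n b w = (\<lambda>i. \<Sum>j\<in>{0..<n}. b i j * w j)"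

lemma ipn_CS: "(ipn n u w)^2 \<le> ipn n u u * ipn n w w"
proof (cases "ipn n w w > 0")
  case True
  define t where "t = ipn n u w / ipn n w w"
  have "0 \<le> (\<Sum>i\<in>{0..<n}. (u i - t * w i)^2)" by (intro sum_nonneg) auto
  also have "\<dots> = ipn n u u - 2 * t * ipn n u w + t^2 * ipn n w w"
    unfolding ipn_def by (simp add: power2_eq_square algebra_simps sum.distrib sum_subtractf sum_distrib_left)
  also have "\<dots> = ipn n u u - (ipn n u w)^2 / ipn n w w"
    unfolding t_def using True by (simp add: power2_eq_square field_simps)
  finally have "(ipn n u w)^2 / ipn n w w \<le> ipn n u u" by simp
  thus ?thesis using True by (simp add: field_simps)
next
  case False
  have "ipn n w w \<ge> 0" unfolding ipn_def by (intro sum_nonneg) auto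
  hence "ipn n w w = 0" using False by simp
  hence "\<forall>i\<in>{0..<n}. w i * w i = 0" unfolding ipn_def
    by (subst sum_nonneg_eq_0_iff[symmetric]) auto
  hence "ipn n u w = 0" unfolding ipn_def by auto
  thus ?thesis using \<open>ipn n w w = 0\<close> by simp
qed

lemma ipn_nonneg: "ipn n w w \<ge> 0" unfolding ipn_def by (intro sum_nonneg) auto

lemma ipn_comm: "ipn n u w = ipn n w u" unfolding ipn_def by (simp add: mult.commute)

lemma ipn_sym:
  assumes sym: "\<And>i j. i < n \<Longrightarrow> j < n \<Longrightarrow> b i j = b j i"
  shows "ipn n u (appb n b w) = ipn n (appb n b u) w"
proof -
  have "ipn n u (appb n b w) = (\<Sum>i\<in>{0..<n}. \<Sum>j\<in>{0..<n}. u i * b i j * w j)"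
    unfolding ipn_def appb_def by (simp add: sum_distrib_left mult.assoc)
  also have "\<dots> = (\<Sum>j\<in>{0..<n}. \<Sum>i\<in>{0..<n}. u i * b i j * w j)" by (rule sum.swap)
  also have "\<dots> = (\<Sum>j\<in>{0..<n}. \<Sum>i\<in>{0..<n}. b j i * u i * w j)"
    using sym by (intro sum.cong refl) (auto simp: mult_ac)
  also have "\<dots> = ipn n (appb n b u) w"
    unfolding ipn_def appb_def by (simp add: sum_distrib_right)
  finally show ?thesis .
qed

lemma iter_growth:
  assumes sym: "\<And>i j. i < n \<Longrightarrow> j < n \<Longrightarrow> b i j = b j i"
    and Q: "Q > 0" and N0: "ipn n z z > 0" and base: "Q * ipn n z z \<le> ipn n z (appb n b z)"
  shows "ipn n ((appb n b ^^ k) z) ((appb n b ^^ k) z) \<ge> (Q^2)^k * ipn n z z"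
proof -
  define W where "W k = (appb n b ^^ k) z" for k
  define N where "N k = ipn n (W k) (W k)" for k
  have WS: "W (Suc k) = appb n b (W k)" for k unfolding W_def by simp
  have step: "N k > 0 \<and> N (Suc k) \<ge> Q^2 * N k" for k
  proof (induction k)
    case 0
    have N0': "N 0 > 0" using N0 unfolding N_def W_def by simp
    have "(ipn n (W 0) (W 1))^2 \<le> N 0 * N 1" unfolding N_def by (rule ipn_CS)
    moreover have "Q * N 0 \<le> ipn n (W 0) (W 1)" using base unfolding N_def W_def by simp
    hence "(Q * N 0)^2 \<le> (ipn n (W 0) (W 1))^2" using Q N0' by (intro power_mono) auto
    ultimately have "(Q * N 0)^2 \<le> N 0 * N 1" by linarith
    hence "N 0 * (Q^2 * N 0) \<le> N 0 * N 1" by (simp add: power2_eq_square mult_ac)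
    hence "Q^2 * N 0 \<le> N 1" using N0' by (simp add: mult_le_cancel_left_pos)
    thus ?case using N0' by simp
  next
    case (Suc k)
    have pos: "N (Suc k) > 0" using Suc Q
      by (smt (verit, best) mult_pos_pos zero_less_power)
    have "N (Suc k) = ipn n (W k) (W (Suc (Suc k)))"
      unfolding N_def WS using ipn_sym[OF sym, where u="W k" and w="appb n b (W k)"] by simp
    hence "(N (Suc k))^2 \<le> N k * N (Suc (Suc k))" unfolding N_def by (metis ipn_CS)
    moreover have "N (Suc k) * (Q^2 * N k) \<le> N (Suc k) * N (Suc k)"
      using Suc pos by (intro mult_left_mono) auto
    ultimately have "N k * (Q^2 * N (Suc k)) \<le> N k * N (Suc (Suc k))"
      by (simp add: power2_eq_square mult_ac)
    hence "Q^2 * N (Suc k) \<le> N (Suc (Suc k))" using Suc by (simp add: mult_le_cancel_left_pos)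
    thus ?case using pos by simp
  qed
  have "N k \<ge> (Q^2)^k * N 0" for k
  proof (induction k)
    case (Suc k)
    have "(Q^2)^Suc k * N 0 = Q^2 * ((Q^2)^k * N 0)" by simp
    also have "\<dots> \<le> Q^2 * N k" using Suc by (intro mult_left_mono) auto
    also have "\<dots> \<le> N (Suc k)" using step by blast
    finally show ?case .
  qed simp
  thus ?thesis unfolding N_def W_def by simp
qed



lemma mat_iter:
  assumes B: "B \<in> carrier_mat n n" and Bb: "\<And>i j. i < n \<Longrightarrow> j < n \<Longrightarrow> B $$ (i,j) = complex_of_real (b i j)"
  shows "(B ^\<^sub>m k) *\<^sub>v vec n (\<lambda>i. complex_of_real (z i)) = vec n (\<lambda>i. complex_of_real ((appb n b ^^ k) z i))"
proof (induction k arbitrary: z)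
  case 0
  then show ?case using B by simp
next
  case (Suc k)
  have Bz: "B *\<^sub>v vec n (\<lambda>i. complex_of_real (z i)) = vec n (\<lambda>i. complex_of_real (appb n b z i))"
  proof (rule eq_vecI)
    fix i assume "i < dim_vec (vec n (\<lambda>i. complex_of_real (appb n b z i)))"
    hence i: "i < n" by simp
    have "(B *\<^sub>v vec n (\<lambda>i. complex_of_real (z i))) $ i = (\<Sum>j\<in>{0..<n}. B $$ (i,j) * complex_of_real (z j))"
      using i B by (simp add: scalar_prod_def)
    also have "\<dots> = (\<Sum>j\<in>{0..<n}. complex_of_real (b i j * z j))"
      using Bb i by (intro sum.cong) auto
    also have "\<dots> = complex_of_real (appb n b z i)" unfolding appb_def by simp
    finally show "(B *\<^sub>v vec n (\<lambda>i. complex_of_real (z i))) $ i = vec n (\<lambda>i. complex_of_real (appb n b z i)) $ i"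
      using i by simp
  qed (use B in simp)
  have "(B ^\<^sub>m Suc k) *\<^sub>v vec n (\<lambda>i. complex_of_real (z i)) = (B ^\<^sub>m k) *\<^sub>v (B *\<^sub>v vec n (\<lambda>i. complex_of_real (z i)))"
    using B by (simp add: assoc_mult_mat_vec[of _ n n _ n])
  also have "\<dots> = vec n (\<lambda>i. complex_of_real ((appb n b ^^ k) (appb n b z) i))"
    unfolding Bz Suc.IH ..
  finally show ?case by (simp add: funpow_Suc_right del: funpow.simps)
qed

lemma rayleigh:
  assumes B: "B \<in> carrier_mat n n" and Bb: "\<And>i j. i < n \<Longrightarrow> j < n \<Longrightarrow> B $$ (i,j) = complex_of_real (b i j)"
    and sym: "\<And>i j. i < n \<Longrightarrow> j < n \<Longrightarrow> b i j = b j i" and n: "n > 0"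
  shows "ipn n z (appb n b z) \<le> spectral_radius B * ipn n z z"
proof (rule ccontr)
  let ?r = "spectral_radius B"
  define L where "L = ipn n z (appb n b z)"
  define N0 where "N0 = ipn n z z"
  assume "\<not> ipn n z (appb n b z) \<le> ?r * ipn n z z"
  hence lt: "?r * N0 < L" unfolding L_def N0_def by simp
  have r0: "?r \<ge> 0" by (rule spectral_radius_nonneg[OF B n])
  have N0pos: "N0 > 0"
  proof (rule ccontr)
    assume "\<not> N0 > 0"
    hence "N0 = 0" using ipn_nonneg[of n z] unfolding N0_def by simp
    hence "\<forall>i\<in>{0..<n}. z i * z i = 0" unfolding N0_def ipn_def
      by (subst sum_nonneg_eq_0_iff[symmetric]) auto
    hence "L = 0" unfolding L_def ipn_def by auto
    thus False using lt \<open>N0 = 0\<close> by simp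
  qed
  define Q where "Q = L / N0"
  have rQ: "?r < Q" unfolding Q_def using lt N0pos by (simp add: field_simps)
  define s where "s = (?r + Q) / 2"
  have s: "?r < s" "s < Q" "s > 0" unfolding s_def using rQ r0 by auto
  obtain c where c: "\<And>k i j. i < n \<Longrightarrow> j < n \<Longrightarrow> cmod ((B ^\<^sub>m k) $$ (i,j)) \<le> c * s ^ k"
    using growth_bound[OF B n s(1)] by blast
  define Z where "Z = (\<Sum>j\<in>{0..<n}. \<bar>z j\<bar>)"
  define W where "W k = (appb n b ^^ k) z" for k
  have Wb: "\<bar>W k i\<bar> \<le> c * s^k * Z" if i: "i < n" for k i
  proof -
    have "complex_of_real (W k i) = ((B ^\<^sub>m k) *\<^sub>v vec n (\<lambda>i. complex_of_real (z i))) $ i"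
      using mat_iter[OF B Bb, of k z] i unfolding W_def by simp
    also have "\<dots> = (\<Sum>j\<in>{0..<n}. (B ^\<^sub>m k) $$ (i,j) * complex_of_real (z j))"
      using i B by (simp add: scalar_prod_def)
    finally have "\<bar>W k i\<bar> = cmod (\<Sum>j\<in>{0..<n}. (B ^\<^sub>m k) $$ (i,j) * complex_of_real (z j))"
      by (metis norm_of_real)
    also have "\<dots> \<le> (\<Sum>j\<in>{0..<n}. cmod ((B ^\<^sub>m k) $$ (i,j) * complex_of_real (z j)))"
      by (rule norm_sum)
    also have "\<dots> \<le> (\<Sum>j\<in>{0..<n}. c * s^k * \<bar>z j\<bar>)"
      using c i by (intro sum_mono) (auto simp: norm_mult intro!: mult_right_mono)
    also have "\<dots> = c * s^k * Z" unfolding Z_def by (simp add: sum_distrib_left)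
    finally show ?thesis .
  qed
  define K where "K = real n * (c * Z)^2"
  have upper: "ipn n (W k) (W k) \<le> K * (s^2)^k" for k
  proof -
    have "ipn n (W k) (W k) \<le> (\<Sum>i\<in>{0..<n}. (c * s^k * Z)^2)" unfolding ipn_def
    proof (intro sum_mono)
      fix i assume "i \<in> {0..<n}"
      hence "\<bar>W k i\<bar> \<le> c * s^k * Z" using Wb by simp
      hence "\<bar>W k i\<bar>^2 \<le> (c * s^k * Z)^2" by (intro power_mono) auto
      thus "W k i * W k i \<le> (c * s^k * Z)^2" by (simp add: power2_eq_square)
    qed
    also have "\<dots> = K * (s^2)^k" unfolding K_def by (simp add: power_mult_distrib power_mult[symmetric] mult_ac)
    finally show ?thesis .
  qed
  have Q0: "Q > 0" using s by simp
  have base: "Q * ipn n z z \<le> ipn n z (appb n b z)" unfolding Q_def N0_def[symmetric] L_def[symmetric]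
    using N0pos by simp
  have lower: "ipn n (W k) (W k) \<ge> (Q^2)^k * N0" for k
  proof -
    have N0': "ipn n z z > 0" using N0pos unfolding N0_def .
    show ?thesis using iter_growth[OF sym Q0 N0' base, of k] unfolding W_def N0_def by simp
  qed
  define x where "x = Q^2 / s^2"
  have x1: "x > 1" unfolding x_def using s by (simp add: power_strict_mono)
  obtain k where k: "K / N0 < x ^ k" using real_arch_pow[OF x1] by blast
  have "(Q^2)^k = x^k * (s^2)^k" unfolding x_def using s by (simp add: power_divide)
  hence "x^k * (s^2)^k * N0 \<le> K * (s^2)^k" using lower[of k] upper[of k] by simp
  hence "x^k * N0 \<le> K" using s by (simp add: mult_ac)
  hence "x^k \<le> K / N0" using N0pos by (simp add: field_simps)
  thus False using k by simp
qed



lemma Re_eq_cmod: "Re z = cmod z \<Longrightarrow> z = complex_of_real (cmod z)"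
proof -
  assume h: "Re z = cmod z"
  have "(cmod z)^2 = (Re z)^2 + (Im z)^2" by (simp add: cmod_power2)
  hence "Im z = 0" using h by simp
  thus ?thesis using h by (intro complex_eqI) auto
qed

lemma tri_eq:
  assumes fin: "finite S" and eq: "(\<Sum>j\<in>S. cmod (f j)) = cmod (\<Sum>j\<in>S. f j)"
    and nz: "(\<Sum>j\<in>S. f j) \<noteq> 0" and j: "j \<in> S"
  shows "f j = complex_of_real (cmod (f j)) * ((\<Sum>j\<in>S. f j) / complex_of_real (cmod (\<Sum>j\<in>S. f j)))"
proof -
  define T where "T = (\<Sum>j\<in>S. f j)"
  define \<omega> where "\<omega> = T / complex_of_real (cmod T)"
  have cT: "cmod T > 0" using nz unfolding T_def by simp
  have om: "cmod \<omega> = 1" unfolding \<omega>_def using cT by (simp add: norm_divide)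
  have omc: "\<omega> * cnj \<omega> = 1"
    by (metis complex_norm_square mult.commute of_real_1 power_one om)
  have "cnj \<omega> * T = (T * cnj T) / complex_of_real (cmod T)" unfolding \<omega>_def by (simp add: mult.commute)
  also have "T * cnj T = complex_of_real (cmod T)^2" by (metis complex_norm_square of_real_power)
  also have "complex_of_real (cmod T)^2 / complex_of_real (cmod T) = complex_of_real (cmod T)"
    using cT by (simp add: power2_eq_square)
  finally have oT: "cnj \<omega> * T = complex_of_real (cmod T)" .
  have "(\<Sum>j\<in>S. Re (cnj \<omega> * f j)) = Re (\<Sum>j\<in>S. cnj \<omega> * f j)" by (simp only: Re_sum)
  also have "(\<Sum>j\<in>S. cnj \<omega> * f j) = cnj \<omega> * T" unfolding T_def by (simp only: sum_distrib_left)
  also have "Re (cnj \<omega> * T) = cmod T" using oT by simp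
  finally have sumRe: "(\<Sum>j\<in>S. Re (cnj \<omega> * f j)) = cmod T" .
  have le: "Re (cnj \<omega> * f j) \<le> cmod (f j)" for j
    using complex_Re_le_cmod[of "cnj \<omega> * f j"] om by (simp add: norm_mult)
  have "(\<Sum>j\<in>S. cmod (f j) - Re (cnj \<omega> * f j)) = 0"
    using eq sumRe unfolding T_def by (simp add: sum_subtractf)
  hence "\<forall>j\<in>S. cmod (f j) - Re (cnj \<omega> * f j) = 0"
    using fin le by (subst sum_nonneg_eq_0_iff[symmetric]) (auto simp: le)
  hence "Re (cnj \<omega> * f j) = cmod (cnj \<omega> * f j)" using j om by (simp add: norm_mult)
  hence "cnj \<omega> * f j = complex_of_real (cmod (cnj \<omega> * f j))" by (rule Re_eq_cmod)
  hence "cnj \<omega> * f j = complex_of_real (cmod (f j))" using om by (simp add: norm_mult)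
  hence "\<omega> * (cnj \<omega> * f j) = \<omega> * complex_of_real (cmod (f j))" by simp
  hence "f j = \<omega> * complex_of_real (cmod (f j))" using omc by (simp add: mult.assoc[symmetric])
  thus ?thesis unfolding \<omega>_def T_def by (simp add: mult.commute)
qed

lemma psd_kernel:
  assumes ray: "\<And>z. ipn n z (appb n b z) \<le> r * ipn n z z"
    and sym: "\<And>i j. i < n \<Longrightarrow> j < n \<Longrightarrow> b i j = b j i"
    and diag: "\<And>i. b i i = 0" and r0: "r \<ge> 0"
    and D0: "ipn n y (appb n b y) - r * ipn n y y \<ge> 0"
    and k: "k < n" and dk: "appb n b y k - r * y k \<ge> 0"
  shows "appb n b y k = r * y k"
proof (rule ccontr)
  define d where "d = appb n b y k - r * y k"
  assume "appb n b y k \<noteq> r * y k"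
  hence dpos: "d > 0" using dk unfolding d_def by simp
  define t where "t = d / (r + 1)"
  have t0: "t > 0" unfolding t_def using dpos r0 by simp
  define z where "z = (\<lambda>i. y i + (if i = k then t else 0))"
  have kin: "k \<in> {0..<n}" using k by simp
  have zz: "ipn n z z = ipn n y y + 2 * t * y k + t^2"
  proof -
    have "ipn n z z = (\<Sum>i\<in>{0..<n}. y i * y i + (if i = k then 2 * t * y k + t^2 else 0))"
      unfolding ipn_def z_def by (intro sum.cong) (auto simp: algebra_simps power2_eq_square)
    also have "\<dots> = ipn n y y + 2 * t * y k + t^2"
      unfolding ipn_def sum.distrib using kin by simp
    finally show ?thesis .
  qed
  have az: "appb n b z i = appb n b y i + t * b i k" for i
  proof -
    have "appb n b z i = (\<Sum>j\<in>{0..<n}. b i j * y j + (if j = k then t * b i k else 0))"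
      unfolding appb_def z_def by (intro sum.cong) (auto simp: algebra_simps)
    also have "\<dots> = appb n b y i + t * b i k"
      unfolding appb_def sum.distrib using kin by simp
    finally show ?thesis .
  qed
  have colk: "(\<Sum>i\<in>{0..<n}. y i * b i k) = appb n b y k"
    unfolding appb_def using sym k by (intro sum.cong) (auto simp: mult.commute)
  have zaz: "ipn n z (appb n b z) = ipn n y (appb n b y) + 2 * t * appb n b y k"
  proof -
    have "ipn n z (appb n b z) = (\<Sum>i\<in>{0..<n}. y i * appb n b y i + t * (y i * b i k)
        + (if i = k then t * appb n b y k + t * t * b k k else 0))"
      unfolding ipn_def az unfolding z_def by (intro sum.cong) (auto simp: algebra_simps)
    also have "\<dots> = ipn n y (appb n b y) + t * (\<Sum>i\<in>{0..<n}. y i * b i k) + (t * appb n b y k + t * t * b k k)"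
      unfolding ipn_def sum.distrib sum_distrib_left[symmetric] using kin by simp
    also have "\<dots> = ipn n y (appb n b y) + 2 * t * appb n b y k"
      unfolding colk diag by simp
    finally show ?thesis .
  qed
  have "ipn n z (appb n b z) \<le> r * ipn n z z" by (rule ray)
  hence "ipn n y (appb n b y) + 2 * t * appb n b y k \<le> r * (ipn n y y + 2 * t * y k + t^2)"
    unfolding zaz zz .
  hence "2 * t * d \<le> r * t^2" using D0 unfolding d_def by (simp add: algebra_simps)
  hence "2 * d \<le> r * t" using t0 by (simp add: power2_eq_square mult_le_cancel_left_pos)
  moreover have "r * t < d" unfolding t_def using dpos r0 by (simp add: field_simps)
  ultimately show False using dpos by simp
qed



lemma cycle_radius_differs:
  assumes sg: "simple_graph n E" and conn: "graph_connected n E" and cyc: "has_cycle E"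
  shows "\<exists>\<phi> \<psi>. T_gain E \<phi> \<and> T_gain E \<psi> \<and>
           spectral_radius (gain_adj n E \<phi>) \<noteq> spectral_radius (gain_adj n E \<psi>)"
proof -
  have sgE: "s < n" "t < n" "s \<noteq> t" "E t s" if "E s t" for s t
    using sg that unfolding simple_graph_def by blast+
  obtain vs where vs: "length vs \<ge> 3" "distinct vs" "\<forall>i. Suc i < length vs \<longrightarrow> E (vs!i) (vs!Suc i)"
    "E (last vs) (hd vs)" using cyc unfolding has_cycle_def by blast
  define m where "m = length vs"
  define p where "p = vs ! 0"
  define q where "q = vs ! 1"
  have m3: "m \<ge> 3" using vs(1) unfolding m_def .
  have Epq: "E p q" using vs(3)[rule_format, of 0] m3 unfolding p_def q_def m_def by simp
  have dist: "i < m \<Longrightarrow> j < m \<Longrightarrow> vs ! i = vs ! j \<longleftrightarrow> i = j" for i j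
    using nth_eq_iff_index_eq[OF vs(2)] unfolding m_def by blast
  have pq: "p \<noteq> q" unfolding p_def q_def using dist[of 0 1] m3 by simp
  define \<psi> where "\<psi> = (\<lambda>s t. if s = p \<and> t = q then \<i> else if s = q \<and> t = p then - \<i> else (1::complex))"
  define \<phi> where "\<phi> = (\<lambda>(s::nat) (t::nat). (1::complex))"
  have g\<phi>: "T_gain E \<phi>" unfolding T_gain_def \<phi>_def by simp
  have cmod\<psi>: "cmod (\<psi> s t) = 1" for s t unfolding \<psi>_def by simp
  have g\<psi>: "T_gain E \<psi>" unfolding T_gain_def
  proof (intro allI impI conjI)
    fix s t show "cmod (\<psi> s t) = 1" by (rule cmod\<psi>)
    show "\<psi> t s = inverse (\<psi> s t)" unfolding \<psi>_def using pq by (auto simp: inverse_eq_divide)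
  qed
  show ?thesis
  proof (rule ccontr)
    assume "\<not> ?thesis"
    hence eqr: "spectral_radius (gain_adj n E \<psi>) = spectral_radius (gain_adj n E \<phi>)"
      using g\<phi> g\<psi> by metis
    define A where "A = gain_adj n E \<psi>"
    define B where "B = gain_adj n E \<phi>"
    define r where "r = spectral_radius B"
    define b where "b = (\<lambda>i j. if E i j then 1 else (0::real))"
    have n: "n > 0" using sgE(1)[OF Epq] by simp
    have A: "A \<in> carrier_mat n n" "B \<in> carrier_mat n n" unfolding A_def B_def by simp_all
    have Bb: "B $$ (i,j) = complex_of_real (b i j)" if "i < n" "j < n" for i j
      using that unfolding B_def b_def \<phi>_def by simp
    have symb: "b i j = b j i" if "i < n" "j < n" for i j
      unfolding b_def using sgE(4) by metis
    have diagb: "b i i = 0" for i unfolding b_def using sgE(3) by auto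
    have b01: "b i j \<ge> 0" for i j unfolding b_def by simp
    have ray: "ipn n z (appb n b z) \<le> r * ipn n z z" for z
      unfolding r_def by (rule rayleigh[OF A(2) Bb symb n])
    have r0: "r \<ge> 0" unfolding r_def by (rule spectral_radius_nonneg[OF A(2) n])
    obtain lam where lam: "lam \<in> spectrum A" "spectral_radius A = cmod lam"
      using spectral_radius_mem_max(1)[OF A(1) n] by auto
    have cl: "cmod lam = r" using lam(2) eqr unfolding r_def A_def B_def by simp
    obtain x where "eigenvector A x lam" using lam(1) unfolding spectrum_def eigenvalue_def by auto
    hence x: "x \<in> carrier_vec n" "x \<noteq> 0\<^sub>v n" "A *\<^sub>v x = lam \<cdot>\<^sub>v x"
      using A(1) unfolding eigenvector_def by auto
    define y where "y i = cmod (x $ i)" for i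
    define c where "c i j = (if E i j then \<psi> i j * x $ j else 0)" for i j
    have y0: "y i \<ge> 0" for i unfolding y_def by simp
    have Ax: "lam * x $ i = (\<Sum>j\<in>{0..<n}. c i j)" if i: "i < n" for i
    proof -
      have "lam * x $ i = (A *\<^sub>v x) $ i" using x(3) x(1) i by simp
      also have "\<dots> = (\<Sum>j\<in>{0..<n}. A $$ (i,j) * x $ j)"
        using i A(1) x(1) by (simp add: scalar_prod_def)
      also have "\<dots> = (\<Sum>j\<in>{0..<n}. c i j)"
        using i unfolding A_def c_def by (intro sum.cong) auto
      finally show ?thesis .
    qed
    have cmodc: "cmod (c i j) = b i j * y j" for i j
      unfolding c_def b_def y_def by (simp add: norm_mult cmod\<psi>)
    have sumc: "(\<Sum>j\<in>{0..<n}. cmod (c i j)) = appb n b y i" for i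
      unfolding appb_def cmodc ..
    have ineq: "r * y i \<le> appb n b y i" if i: "i < n" for i
    proof -
      have "r * y i = cmod (lam * x $ i)" unfolding y_def cl[symmetric] by (simp add: norm_mult)
      also have "\<dots> = cmod (\<Sum>j\<in>{0..<n}. c i j)" using Ax[OF i] by simp
      also have "\<dots> \<le> (\<Sum>j\<in>{0..<n}. cmod (c i j))" by (rule norm_sum)
      finally show ?thesis unfolding sumc .
    qed
    have D0: "ipn n y (appb n b y) - r * ipn n y y \<ge> 0"
    proof -
      have "ipn n y (appb n b y) - r * ipn n y y = (\<Sum>i\<in>{0..<n}. y i * (appb n b y i - r * y i))"
        unfolding ipn_def by (simp add: sum_subtractf sum_distrib_left algebra_simps)
      also have "\<dots> \<ge> 0" using ineq y0 by (intro sum_nonneg) auto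
      finally show ?thesis .
    qed
    have eqB: "appb n b y k = r * y k" if k: "k < n" for k
    proof -
      have dk: "appb n b y k - r * y k \<ge> 0" using ineq[OF k] by linarith
      show ?thesis by (rule psd_kernel[OF ray symb diagb r0 D0 k dk])
    qed
    have zprop: "y j = 0" if "(i, j) \<in> {(a, b). E a b}\<^sup>*" "y i = 0" for i j
      using that
    proof (induction rule: rtrancl_induct)
      case base
      then show ?case by simp
    next
      case (step j k)
      hence Ejk: "E j k" by simp
      have jn: "j < n" "k < n" using sgE[OF Ejk] by auto
      have "(\<Sum>l\<in>{0..<n}. b j l * y l) = 0" using eqB[OF jn(1)] step unfolding appb_def by simp
      hence "\<forall>l\<in>{0..<n}. b j l * y l = 0"
        by (subst sum_nonneg_eq_0_iff[symmetric]) (auto simp: b01 y0)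
      hence "b j k * y k = 0" using jn by simp
      thus ?case using Ejk unfolding b_def by simp
    qed
    have ypos: "y i > 0" if i: "i < n" for i
    proof (rule ccontr)
      assume "\<not> y i > 0"
      hence yi: "y i = 0" using y0[of i] by simp
      have "x = 0\<^sub>v n"
      proof (rule eq_vecI)
        fix j assume "j < dim_vec (0\<^sub>v n :: complex vec)"
        hence j: "j < n" by simp
        have "y j = 0" using zprop[OF _ yi] conn i j unfolding graph_connected_def by blast
        thus "x $ j = 0\<^sub>v n $ j" using j unfolding y_def by simp
      qed (use x(1) in simp)
      thus False using x(2) by simp
    qed
    have pn: "p < n" "q < n" using sgE[OF Epq] by auto
    have rpos: "r > 0"
    proof -
      have "b p q * y q \<le> (\<Sum>l\<in>{0..<n}. b p l * y l)"
        by (rule member_le_sum) (use pn b01 y0 in auto)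
      hence "y q \<le> r * y p" using eqB[OF pn(1)] Epq unfolding appb_def b_def by simp
      hence "0 < r * y p" using ypos[OF pn(2)] by simp
      thus ?thesis using r0 ypos[OF pn(1)] by (simp add: zero_less_mult_iff)
    qed
    define u where "u i = x $ i / complex_of_real (y i)" for i
    define \<mu> where "\<mu> = lam / complex_of_real r"
    have xu: "x $ i = complex_of_real (y i) * u i" if "i < n" for i
      unfolding u_def using ypos[OF that] by simp
    have u1: "cmod (u i) = 1" if "i < n" for i
      unfolding u_def y_def using ypos[OF that] unfolding y_def by (simp add: norm_divide)
    have key: "\<psi> i j * u j = \<mu> * u i" if Eij: "E i j" for i j
    proof -
      have ij: "i < n" "j < n" using sgE[OF Eij] by auto
      have teq: "(\<Sum>j\<in>{0..<n}. cmod (c i j)) = cmod (\<Sum>j\<in>{0..<n}. c i j)"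
        unfolding sumc eqB[OF ij(1)] Ax[OF ij(1), symmetric] y_def cl[symmetric] by (simp add: norm_mult)
      have S: "cmod (\<Sum>j\<in>{0..<n}. c i j) = r * y i"
        unfolding Ax[OF ij(1), symmetric] y_def cl[symmetric] by (simp add: norm_mult)
      have Snz: "(\<Sum>j\<in>{0..<n}. c i j) \<noteq> 0" using S rpos ypos[OF ij(1)] by auto
      have tri: "c i j = complex_of_real (cmod (c i j)) * ((\<Sum>j\<in>{0..<n}. c i j) / complex_of_real (cmod (\<Sum>j\<in>{0..<n}. c i j)))"
        by (rule tri_eq[OF _ teq Snz]) (use ij in simp_all)
      have "\<psi> i j * x $ j = complex_of_real (y j) * (lam * x $ i / complex_of_real (r * y i))"
      proof -
        have S': "cmod (lam * x $ i) = r * y i" using S Ax[OF ij(1)] by simp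
        show ?thesis using tri[unfolded Ax[OF ij(1), symmetric] cmodc S'] Eij unfolding c_def b_def by simp
      qed
      hence "\<psi> i j * (complex_of_real (y j) * u j) = complex_of_real (y j) * (lam * (complex_of_real (y i) * u i) / complex_of_real (r * y i))"
        unfolding xu[OF ij(1)] xu[OF ij(2)] .
      hence "complex_of_real (y j) * (\<psi> i j * u j) = complex_of_real (y j) * (\<mu> * u i)"
        unfolding \<mu>_def using ypos[OF ij(1)] rpos by (simp add: field_simps)
      thus ?thesis using ypos[OF ij(2)] by simp
    qed
    have unz: "u i \<noteq> 0" if "i < n" for i using u1[OF that] by auto
    have mu2: "\<mu>^2 = 1"
    proof -
      have "(\<i> * u q) * (- \<i> * u p) = (\<mu> * u p) * (\<mu> * u q)"
        using key[OF Epq] key[OF sgE(4)[OF Epq]] pq unfolding \<psi>_def by simp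
      hence "(u p * u q) * 1 = (u p * u q) * \<mu>^2" by (simp add: power2_eq_square mult_ac)
      thus ?thesis using unz[OF pn(1)] unz[OF pn(2)] by simp
    qed
    have path: "u (vs ! k) = \<mu>^(k - 1) * u q" if "1 \<le> k" "k < m" for k
      using that
    proof (induction k)
      case 0
      then show ?case by simp
    next
      case (Suc k)
      show ?case
      proof (cases "k = 0")
        case True
        then show ?thesis unfolding q_def by simp
      next
        case False
        have E: "E (vs ! k) (vs ! Suc k)" using vs(3) Suc.prems unfolding m_def by blast
        have ne: "vs ! k \<noteq> p" "vs ! Suc k \<noteq> p" unfolding p_def using dist[of k 0] dist[of "Suc k" 0] Suc.prems False
          by auto
        have "\<psi> (vs ! k) (vs ! Suc k) = 1" unfolding \<psi>_def using ne by simp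
        hence "u (vs ! Suc k) = \<mu> * u (vs ! k)" using key[OF E] by simp
        also have "u (vs ! k) = \<mu>^(k - 1) * u q" using Suc.IH Suc.prems False by simp
        finally show ?thesis using False by (cases k) (auto simp: mult_ac)
      qed
    qed
    have lastE: "E (vs ! (m - 1)) p"
    proof -
      have vsne: "vs \<noteq> []" using m3 unfolding m_def by auto
      show ?thesis using vs(4) unfolding p_def m_def last_conv_nth[OF vsne] hd_conv_nth[OF vsne] .
    qed
    have "\<psi> (vs ! (m - 1)) p = 1"
      unfolding \<psi>_def using dist[of "m - 1" 0] dist[of "m - 1" 1] m3 pq unfolding p_def q_def by auto
    hence "u p = \<mu> * u (vs ! (m - 1))" using key[OF lastE] by simp
    also have "u (vs ! (m - 1)) = \<mu>^(m - 2) * u q" using path[of "m - 1"] m3 by (simp add: numeral_2_eq_2)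
    finally have up0: "u p = \<mu> * (\<mu>^(m - 2) * u q)" .
    have m1: "m - 1 = Suc (m - 2)" "m = Suc (m - 1)" using m3 by auto
    have up: "u p = \<mu>^(m - 1) * u q" unfolding up0 by (subst m1(1)) (simp only: power_Suc mult.assoc)
    have "\<i> * u q = \<mu> * u p" using key[OF Epq] unfolding \<psi>_def by simp
    hence "\<i> * u q = \<mu> * (\<mu>^(m - 1) * u q)" unfolding up .
    hence "\<i> * u q = \<mu>^m * u q" by (subst m1(2)) (simp only: power_Suc mult.assoc)
    hence imu: "\<i> = \<mu>^m" using unz[OF pn(2)] by simp
    have "\<mu> = 1 \<or> \<mu> = -1" using mu2 by (simp add: power2_eq_1_iff)
    moreover have "\<mu>^m \<noteq> \<i>" if "\<mu> = 1 \<or> \<mu> = -1"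
      using that by (auto simp: complex_eq_iff)
    ultimately show False using imu by simp
  qed
qed


theorem theorem3p4:
  fixes n :: nat and E :: "nat \<Rightarrow> nat \<Rightarrow> bool"
  assumes "simple_graph n E" and "graph_connected n E"
  shows "(is_tree n E \<longleftrightarrow>
            (\<forall>\<phi> \<psi>. T_gain E \<phi> \<and> T_gain E \<psi> \<longrightarrow> cospectral (gain_adj n E \<phi>) (gain_adj n E \<psi>)))
       \<and> (is_tree n E \<longleftrightarrow>
            (\<forall>\<phi> \<psi>. T_gain E \<phi> \<and> T_gain E \<psi> \<longrightarrow>
               spectral_radius (gain_adj n E \<phi>) = spectral_radius (gain_adj n E \<psi>)))"
proof -
  let ?C = "\<forall>\<phi> \<psi>. T_gain E \<phi> \<and> T_gain E \<psi> \<longrightarrow> cospectral (gain_adj n E \<phi>) (gain_adj n E \<psi>)"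
  let ?R = "\<forall>\<phi> \<psi>. T_gain E \<phi> \<and> T_gain E \<psi> \<longrightarrow>
               spectral_radius (gain_adj n E \<phi>) = spectral_radius (gain_adj n E \<psi>)"
  have t1: ?C if "is_tree n E"
  proof (intro allI impI)
    fix \<phi> \<psi> assume "T_gain E \<phi> \<and> T_gain E \<psi>"
    thus "cospectral (gain_adj n E \<phi>) (gain_adj n E \<psi>)"
      using tree_similar[OF assms(1)] that unfolding is_tree_def
      by (intro similar_cospectral) blast
  qed
  have t2: ?R if ?C
  proof (intro allI impI)
    fix \<phi> \<psi> assume "T_gain E \<phi> \<and> T_gain E \<psi>"
    thus "spectral_radius (gain_adj n E \<phi>) = spectral_radius (gain_adj n E \<psi>)"
      using that by (intro cospectral_radius[OF gain_adj_carrier gain_adj_carrier]) blast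
  qed
  have t3: "is_tree n E" if ?R
  proof (rule ccontr)
    assume "\<not> is_tree n E"
    hence "has_cycle E" using assms(2) unfolding is_tree_def by simp
    from cycle_radius_differs[OF assms this] that show False by blast
  qed
  show ?thesis using t1 t2 t3 by blast
qed

end
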